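(* Let $X$ be a separable infinite dimensional Banach space and let $T$ be a bounded linear operator on $X$. If $T$ satisfies the Hypercyclicity Criterion, then $T$ satisfies the $\varepsilon$-Hypercyclicity Criterion for every $\varepsilon>0$.
   Context: $T$ satisfies the Hypercyclicity Criterion if there exist a sequence of integers $(n(k))_k$, two dense sets $\mathcal{D}_1,\mathcal{D}_2\subset X$ and maps $S_{n(k)}:\mathcal{D}_2\to X$ such that $T^{n(k)}x\to0$ for all $x\in\mathcal{D}_1$, $S_{n(k)}y\to0$ for all $y\in\mathcal{D}_2$, and $T^{n(k)}S_{n(k)}y\to y$ for all $y\in\mathcal{D}_2$. For $\varepsilon>0$, $T$ satisfies the $\varepsilon$-Hypercyclicity Criterion if there exist a dense set $\mathcal{D}_1\subset X$, a countable set $\mathcal{D}_2=\{y_k:k\in\mathbb{N}\}\subset X$ (with a fixed enumeration) such that for each $x\in X\setminus\{0\}$ there are infinitely many $k$ with $y_k$ in the closed ball $B(x,\varepsilon\|x\|)$, an increasing sequence $(n(k))_k\subset\mathbb{N}$ and maps $S_{n(k)}:\mathcal{D}_2\to X$ such that $\|T^{n(k)}x\|\to0$ for all $x\in\mathcal{D}_1$, $\|S_{n(k)}y_k\|\to0$, and $\|T^{n(k)}S_{n(k)}y_k-y_k\|\to0$ as $k\to\infty$. *)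

theory Defs
  imports "HOL-Analysis.Analysis"
begin

definition infinite_dimensional :: "'a::real_vector itself \<Rightarrow> bool" where
  "infinite_dimensional _ \<longleftrightarrow> \<not> (\<exists>B::'a set. finite B \<and> span B = UNIV)"

definition hypercyclicity_criterion :: "('a::real_normed_vector \<Rightarrow> 'a) \<Rightarrow> bool" where
  "hypercyclicity_criterion T \<longleftrightarrow>
     (\<exists>(n::nat \<Rightarrow> nat) (D1::'a set) (D2::'a set) (S::nat \<Rightarrow> 'a \<Rightarrow> 'a).
        closure D1 = UNIV \<and> closure D2 = UNIV \<and>
        (\<forall>x\<in>D1. (\<lambda>k. (T ^^ n k) x) \<longlonglongrightarrow> 0) \<and>
        (\<forall>y\<in>D2. (\<lambda>k. S (n k) y) \<longlonglongrightarrow> 0) \<and>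
        (\<forall>y\<in>D2. (\<lambda>k. (T ^^ n k) (S (n k) y)) \<longlonglongrightarrow> y))"

text \<open>epsilon-Hypercyclicity Criterion; D2 = range y with the enumeration y,
  S (n k) is the map S_{n(k)} defined on D2.\<close>
definition eps_hypercyclicity_criterion :: "real \<Rightarrow> ('a::real_normed_vector \<Rightarrow> 'a) \<Rightarrow> bool" where
  "eps_hypercyclicity_criterion \<epsilon> T \<longleftrightarrow>
     (\<exists>(D1::'a set) (y::nat \<Rightarrow> 'a) (n::nat \<Rightarrow> nat) (S::nat \<Rightarrow> 'a \<Rightarrow> 'a).
        closure D1 = UNIV \<and>
        (\<forall>x. x \<noteq> 0 \<longrightarrow> infinite {k. y k \<in> cball x (\<epsilon> * norm x)}) \<and>
        strict_mono n \<and>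
        (\<forall>x\<in>D1. (\<lambda>k. norm ((T ^^ n k) x)) \<longlonglongrightarrow> 0) \<and>
        (\<lambda>k. norm (S (n k) (y k))) \<longlonglongrightarrow> 0 \<and>
        (\<lambda>k. norm ((T ^^ n k) (S (n k) (y k)) - y k)) \<longlonglongrightarrow> 0)"

end

theory Submission
  imports Defs
begin

lemma bl_funpow:
  fixes T :: "'a::real_normed_vector \<Rightarrow> 'a"
  shows "bounded_linear T \<Longrightarrow> bounded_linear (T ^^ m)"
proof (induction m)
  case 0 have "T ^^ 0 = (\<lambda>x. x)" by auto
  then show ?case using bounded_linear_ident by metis
next
  case (Suc m) then show ?case
    by (simp add: bounded_linear_compose)
qed

lemma n_grows:
  fixes T :: "'a::real_normed_vector \<Rightarrow> 'a" and z :: 'a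
  assumes bl: "bounded_linear T" and z: "z \<noteq> 0"
    and D1: "closure D1 = UNIV" and D2: "closure D2 = UNIV"
    and h1: "\<forall>x\<in>D1. (\<lambda>k. (T ^^ n k) x) \<longlonglongrightarrow> 0"
    and h3: "\<forall>y\<in>D2. (\<lambda>k. (T ^^ n k) (S (n k) y)) \<longlonglongrightarrow> y"
  shows "eventually (\<lambda>m. n m > N) sequentially"
proof (rule ccontr)
  assume "\<not> eventually (\<lambda>m. n m > N) sequentially"
  then have inf: "infinite {m. n m \<le> N}"
    by (simp add: cofinite_eq_sequentially[symmetric] eventually_cofinite not_less)
  have "{m. n m \<le> N} = (\<Union>v\<in>{..N}. {m. n m = v})" by auto
  with inf obtain v where iv: "infinite {m. n m = v}" by auto
  define A where "A = {m. n m = v}"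
  define e where "e = enumerate A"
  have sm: "strict_mono e" unfolding e_def using iv A_def strict_mono_enumerate by blast
  have eA: "n (e k) = v" for k using enumerate_in_set[OF iv[folded A_def]] unfolding e_def A_def by auto
  have zero1: "(T ^^ v) x = 0" if "x \<in> D1" for x
  proof -
    have "((\<lambda>k. (T ^^ n k) x) \<circ> e) \<longlonglongrightarrow> 0" using LIMSEQ_subseq_LIMSEQ h1 that sm by blast
    then have "(\<lambda>k. (T ^^ v) x) \<longlonglongrightarrow> 0" by (simp add: comp_def eA)
    then show ?thesis by (simp add: LIMSEQ_const_iff)
  qed
  have cont: "continuous_on UNIV (T ^^ v)"
    using bl_funpow[OF bl] linear_continuous_on by blast
  have zero: "(T ^^ v) x = 0" for x
    using continuous_constant_on_closure[of D1 "T ^^ v" 0 x] cont zero1 D1 by auto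
  have "y = 0" if "y \<in> D2" for y
  proof -
    have "((\<lambda>k. (T ^^ n k) (S (n k) y)) \<circ> e) \<longlonglongrightarrow> y" using LIMSEQ_subseq_LIMSEQ h3 that sm by blast
    then have "(\<lambda>k. 0) \<longlonglongrightarrow> y" by (simp add: comp_def eA zero)
    then show ?thesis by (simp add: LIMSEQ_const_iff)
  qed
  then have "D2 \<subseteq> {0}" by auto
  then have "closure D2 \<subseteq> {0}" by (simp add: closure_minimal)
  moreover have "z \<in> closure D2" using D2 by simp
  ultimately show False using z by blast
qed

theorem proposition3p4:
  fixes T :: "'a::banach \<Rightarrow> 'a"
  assumes "separable_space (euclidean :: 'a topology)"
    and "infinite_dimensional TYPE('a)"
    and "bounded_linear T"
    and "hypercyclicity_criterion T"
  shows "\<forall>\<epsilon>>0. eps_hypercyclicity_criterion \<epsilon> T"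
proof (intro allI impI)
  fix \<epsilon> :: real assume ep: "\<epsilon> > 0"
  obtain z :: 'a where z: "z \<noteq> 0"
  proof -
    have "\<not> (span ({}::'a set) = UNIV)" using assms(2) unfolding infinite_dimensional_def by blast
    then show ?thesis using that by auto
  qed
  obtain n D1 D2 S where D1: "closure D1 = (UNIV::'a set)" and D2: "closure D2 = (UNIV::'a set)"
    and h1: "\<forall>x\<in>D1. (\<lambda>k. (T ^^ n k) x) \<longlonglongrightarrow> 0"
    and h2: "\<forall>y\<in>D2. (\<lambda>k. S (n k) y) \<longlonglongrightarrow> 0"
    and h3: "\<forall>y\<in>D2. (\<lambda>k. (T ^^ n k) (S (n k) y)) \<longlonglongrightarrow> y"
    using assms(4) unfolding hypercyclicity_criterion_def by blast
  obtain C :: "'a set" where C: "countable C" "closure C = UNIV"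
    using assms(1) unfolding separable_space_def by auto
  have "\<exists>d. d \<in> D2 \<and> dist u d < 1 / real (Suc i)" for u i
  proof -
    have "u \<in> closure D2" using D2 by simp
    moreover have "(1::real) / real (Suc i) > 0" by simp
    ultimately obtain d where "d \<in> D2" "dist d u < 1 / real (Suc i)"
      unfolding closure_approachable by blast
    then show ?thesis by (auto simp: dist_commute)
  qed
  then have "\<forall>p. \<exists>d. d \<in> D2 \<and> dist (fst p) d < 1 / real (Suc (snd p))" by blast
  then have "\<exists>f. \<forall>p. f p \<in> D2 \<and> dist (fst p) (f p) < 1 / real (Suc (snd p))"
    by (rule choice)
  then obtain f where f: "\<forall>p. f p \<in> D2 \<and> dist (fst p) (f p) < 1 / real (Suc (snd p))"
    by (elim exE)
  define d where "d = (\<lambda>u i. f (u, i))"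
  have d: "\<And>u i. d u i \<in> D2" "\<And>u i. dist u (d u i) < 1 / real (Suc i)"
    using f[rule_format, of "(u, i)" for u i] unfolding d_def by auto
  define E where "E = (\<lambda>(u,i). d u i) ` (C \<times> UNIV)"
  have Ec: "countable E" unfolding E_def using C(1) by auto
  have ED2: "E \<subseteq> D2" unfolding E_def using d(1) by auto
  have Eapp: "\<exists>e\<in>E. dist x e < r" if "r > 0" for x r
  proof -
    obtain u where u: "u \<in> C" "dist u x < r/2"
    proof -
      have "x \<in> closure C" using C(2) by simp
      moreover have "r/2 > 0" using \<open>r>0\<close> by simp
      ultimately show ?thesis using that unfolding closure_approachable by blast
    qed
    obtain i where i: "1 / real (Suc i) < r/2" using \<open>r>0\<close>
      using nat_approx_posE[of "r/2"] by auto
    have "dist x (d u i) \<le> dist x u + dist u (d u i)" by (rule dist_triangle)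
    also have "\<dots> < r" using u i d(2)[of u i] by (simp add: dist_commute)
    finally show ?thesis unfolding E_def using u(1) by force
  qed
  have Ene: "E \<noteq> {}" using Eapp[of 1 0] by auto
  define c where "c = from_nat_into E"
  have cE: "c i \<in> D2" for i using ED2 range_from_nat_into_subset[OF Ene] c_def by auto
  have capp: "\<exists>i. dist x (c i) < r" if rpos: "r > 0" for x r
  proof -
    obtain e where "e \<in> E" "dist x e < r" using Eapp[OF rpos, of x] by blast
    moreover have "E = range c" using range_from_nat_into[OF Ene Ec] c_def by simp
    ultimately show ?thesis by auto
  qed
  define j where "j = (\<lambda>k. fst (prod_decode k))"
  have jinf: "infinite {k. j k = i}" for i
  proof -
    have "range (\<lambda>l. prod_encode (i, l)) \<subseteq> {k. j k = i}" by (auto simp: j_def)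
    moreover have "inj (\<lambda>l. prod_encode (i, l))" by (auto simp: inj_def prod_encode_eq)
    ultimately show ?thesis using infinite_UNIV_nat finite_subset range_inj_infinite by blast
  qed
  define P where "P = (\<lambda>k m. norm (S (n m) (c (j k))) < 1 / real (Suc k) \<and>
      norm ((T ^^ n m) (S (n m) (c (j k))) - c (j k)) < 1 / real (Suc k))"
  have ex: "\<exists>m. m > M \<and> n m > N \<and> P k m" for k M N
  proof -
    have pos: "1 / real (Suc k) > 0" by simp
    have e1: "eventually (\<lambda>m. norm (S (n m) (c (j k))) < 1 / real (Suc k)) sequentially"
    proof -
      have "(\<lambda>m. S (n m) (c (j k))) \<longlonglongrightarrow> 0" using h2 cE by blast
      from tendsto_iff[THEN iffD1, OF this, rule_format, OF pos] show ?thesis by simp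
    qed
    have e2: "eventually (\<lambda>m. norm ((T ^^ n m) (S (n m) (c (j k))) - c (j k)) < 1 / real (Suc k)) sequentially"
    proof -
      have "(\<lambda>m. (T ^^ n m) (S (n m) (c (j k)))) \<longlonglongrightarrow> c (j k)" using h3 cE by blast
      from tendsto_iff[THEN iffD1, OF this, rule_format, OF pos] show ?thesis by (simp add: dist_norm)
    qed
    have e3: "eventually (\<lambda>m. n m > N) sequentially"
      using n_grows[OF assms(3) z D1 D2 h1 h3] by blast
    have e4: "eventually (\<lambda>m. m > M) sequentially" by (rule eventually_gt_at_top)
    have "eventually (\<lambda>m. m > M \<and> n m > N \<and> P k m) sequentially"
      using e1 e2 e3 e4 unfolding P_def by eventually_elim auto
    then show ?thesis using eventually_happens'[OF sequentially_bot] by blast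
  qed
  define r where "r = rec_nat (SOME m. P 0 m) (\<lambda>k rk. SOME m. m > rk \<and> n m > n rk \<and> P (Suc k) m)"
  have r0: "P 0 (r 0)" unfolding r_def using ex[of 0 0 0] by (auto intro: someI_ex)
  have rS: "r (Suc k) > r k \<and> n (r (Suc k)) > n (r k) \<and> P (Suc k) (r (Suc k))" for k
  proof -
    have "r (Suc k) = (SOME m. m > r k \<and> n m > n (r k) \<and> P (Suc k) m)" unfolding r_def by simp
    then show ?thesis using someI_ex[OF ex[of "r k" "n (r k)" "Suc k"]] by simp
  qed
  have rP: "P k (r k)" for k by (cases k) (use r0 rS in auto)
  have smr: "strict_mono r" using rS by (simp add: strict_mono_Suc_iff)
  have smnr: "strict_mono (n \<circ> r)" using rS by (simp add: strict_mono_Suc_iff)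
  show "eps_hypercyclicity_criterion \<epsilon> T"
    unfolding eps_hypercyclicity_criterion_def
    apply (rule exI[of _ D1], rule exI[of _ "\<lambda>k. c (j k)"], rule exI[of _ "n \<circ> r"], rule exI[of _ S])
  proof (intro conjI)
    show "closure D1 = UNIV" by (rule D1)
    show "strict_mono (n \<circ> r)" by (rule smnr)
    show "\<forall>x\<in>D1. (\<lambda>k. norm ((T ^^ (n \<circ> r) k) x)) \<longlonglongrightarrow> 0"
    proof
      fix x assume "x \<in> D1"
      then have "((\<lambda>k. (T ^^ n k) x) \<circ> r) \<longlonglongrightarrow> 0" using h1 smr LIMSEQ_subseq_LIMSEQ by blast
      then show "(\<lambda>k. norm ((T ^^ (n \<circ> r) k) x)) \<longlonglongrightarrow> 0"
        using tendsto_norm_zero by (force simp: comp_def)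
    qed
    show "(\<lambda>k. norm (S ((n \<circ> r) k) (c (j k)))) \<longlonglongrightarrow> 0"
      by (rule LIMSEQ_norm_0) (use rP in \<open>auto simp: P_def\<close>)
    show "(\<lambda>k. norm ((T ^^ (n \<circ> r) k) (S ((n \<circ> r) k) (c (j k))) - c (j k))) \<longlonglongrightarrow> 0"
      by (rule LIMSEQ_norm_0) (use rP in \<open>auto simp: P_def\<close>)
    show "\<forall>x. x \<noteq> 0 \<longrightarrow> infinite {k. c (j k) \<in> cball x (\<epsilon> * norm x)}"
    proof (intro allI impI)
      fix x :: 'a assume "x \<noteq> 0"
      then have "\<epsilon> * norm x > 0" using ep by simp
      then obtain i where i: "dist x (c i) < \<epsilon> * norm x" using capp by blast
      have "{k. j k = i} \<subseteq> {k. c (j k) \<in> cball x (\<epsilon> * norm x)}" using i by auto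
      then show "infinite {k. c (j k) \<in> cball x (\<epsilon> * norm x)}" using jinf finite_subset by blast
    qed
  qed
qed

end
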